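(* Let $b\ge2$ be an integer, $\gamma\in(0,1)$, and let $\phi$ be a $\mathbb{Z}$-periodic Lipschitz function satisfying condition (H). Then the family $\{m_x\}_{x\in[0,1]}$ is jointly uniformly continuous across scales: for every $\varepsilon>0$ there exists $\delta>0$ such that for every $x\in[0,1]$, every $y\in\mathbb{R}$ and every $r\in(0,1)$, $$m_x(B(y,\delta r))\le\varepsilon\, m_x(B(y,r)).$$
   Context: $\Lambda=\{0,\dots,b-1\}$, $\Sigma=\Lambda^{\mathbb{Z}_+}$, $\nu$ uniform on $\Lambda$. $S(x,\mathbf{j})=\sum_{n\ge1}\gamma^{n-1}\phi\big(\frac{x+j_1+j_2b+\cdots+j_nb^{n-1}}{b^n}\big)$ for $\mathbf{j}\in\Sigma$, $x\in[0,1]$. Condition (H): for all $\mathbf{i}\neq\mathbf{j}\in\Sigma$, $x\mapsto S(x,\mathbf{j})-S(x,\mathbf{i})$ is not identically zero on $[0,1]$. $m_x$ is the image of $\nu^{\mathbb{Z}_+}$ under $\mathbf{j}\mapsto S(x,\mathbf{j})$. *)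

theory Defs
  imports "HOL-Analysis.Analysis" "HOL-Probability.Probability"
begin

text \<open>Digit sequences \<open>j_1, j_2, \<dots>\<close> are encoded as \<open>j :: nat \<Rightarrow> nat\<close> with \<open>j_k = j (k-1)\<close>.\<close>

definition digit_space :: "nat \<Rightarrow> (nat \<Rightarrow> nat) set" where
  "digit_space b = {j. \<forall>k. j k < b}"

definition Sfun :: "nat \<Rightarrow> real \<Rightarrow> (real \<Rightarrow> real) \<Rightarrow> real \<Rightarrow> (nat \<Rightarrow> nat) \<Rightarrow> real" where
  "Sfun b \<gamma> \<phi> x j =
     (\<Sum>n. \<gamma> ^ n * \<phi> ((x + (\<Sum>k<Suc n. real (j k) * real b ^ k)) / real b ^ Suc n))"

definition digit_measure :: "nat \<Rightarrow> (nat \<Rightarrow> nat) measure" where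
  "digit_measure b = PiM UNIV (\<lambda>_. measure_pmf (pmf_of_set {0..<b}))"

definition m_meas :: "nat \<Rightarrow> real \<Rightarrow> (real \<Rightarrow> real) \<Rightarrow> real \<Rightarrow> real measure" where
  "m_meas b \<gamma> \<phi> x = distr (digit_measure b) borel (Sfun b \<gamma> \<phi> x)"

definition cond_H :: "nat \<Rightarrow> real \<Rightarrow> (real \<Rightarrow> real) \<Rightarrow> bool" where
  "cond_H b \<gamma> \<phi> \<longleftrightarrow>
     (\<forall>i\<in>digit_space b. \<forall>j\<in>digit_space b. i \<noteq> j \<longrightarrow>
        \<not> (\<forall>x\<in>{0..1}. Sfun b \<gamma> \<phi> x j - Sfun b \<gamma> \<phi> x i = 0))"

end

theory Submission
  imports Defs
begin

lemma decomp_emeasure: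
  fixes b :: nat
  assumes b: "b > 0" and A: "A \<in> sets (digit_measure b)"
  shows "emeasure (digit_measure b) A =
     (\<Sum>i<b. emeasure (digit_measure b) {j. case_nat i j \<in> A}) / b"
proof -
  define M0 where "M0 = measure_pmf (pmf_of_set {0..<b})"
  interpret S: sequence_space M0
    unfolding M0_def by unfold_locales
  have P: "digit_measure b = S.S" unfolding digit_measure_def M0_def by simp
  interpret PS: pair_sigma_finite M0 S.S ..
  have A': "A \<in> sets S.S" using A P by simp
  have "emeasure S.S A = emeasure (distr (M0 \<Otimes>\<^sub>M S.S) S.S (\<lambda>(s, \<omega>). case_nat s \<omega>)) A"
    by (simp add: S.PiM_iter)
  also have "\<dots> = emeasure (M0 \<Otimes>\<^sub>M S.S) ((\<lambda>(s, \<omega>). case_nat s \<omega>) -` A \<inter> space (M0 \<Otimes>\<^sub>M S.S))"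
    by (rule emeasure_distr) (use A' in auto)
  also have "\<dots> = (\<integral>\<^sup>+ s. emeasure S.S (Pair s -` ((\<lambda>(s, \<omega>). case_nat s \<omega>) -` A \<inter> space (M0 \<Otimes>\<^sub>M S.S))) \<partial>M0)"
    by (rule S.emeasure_pair_measure_alt, rule measurable_sets[OF _ A']) simp
  also have "\<dots> = (\<integral>\<^sup>+ s. emeasure S.S {j. case_nat s j \<in> A} \<partial>M0)"
    by (intro nn_integral_cong arg_cong2[where f=emeasure] refl)
       (auto simp: space_pair_measure M0_def space_PiM)
  also have "\<dots> = (\<Sum>i\<in>{0..<b}. emeasure S.S {j. case_nat i j \<in> A}) / card {0..<b}"
    unfolding M0_def using b by (subst nn_integral_pmf_of_set) auto
  finally show ?thesis using P by (simp add: atLeast0LessThan)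
qed


lemma prob_digit: "b > 0 \<Longrightarrow> prob_space (digit_measure b)"
  unfolding digit_measure_def by (intro prob_space_PiM) (auto simp: prob_space_measure_pmf)

lemma space_digit: "space (digit_measure b) = UNIV"
  by (simp add: digit_measure_def space_PiM)

locale WF =
  fixes b :: nat and \<gamma> :: real and \<phi> :: "real \<Rightarrow> real" and L :: real
  assumes b2: "b \<ge> 2" and g0: "0 < \<gamma>" and g1: "\<gamma> < 1"
    and per: "\<forall>u. \<phi> (u + 1) = \<phi> u" and lip: "L-lipschitz_on UNIV \<phi>"
begin

abbreviation "P \<equiv> digit_measure b"
abbreviation "S \<equiv> Sfun b \<gamma> \<phi>"
definition "G x y r = measure P {j. \<bar>S x j - y\<bar> < r}"
definition "B = \<bar>\<phi> 0\<bar> + L"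
definition "C = B / (1 - \<gamma>)"
definition "xi x i = (x + real i) / real b"
definition "trm x j n = \<gamma> ^ n * \<phi> ((x + (\<Sum>k<Suc n. real (j k) * real b ^ k)) / real b ^ Suc n)"

lemma bpos: "b > 0" using b2 by simp
lemma L0: "0 \<le> L" using lip lipschitz_on_nonneg by blast

interpretation Pp: prob_space P using prob_digit bpos by blast

lemma per_nat: "\<phi> (u + real n) = \<phi> u"
proof (induction n arbitrary: u)
  case (Suc n)
  have "\<phi> (u + real (Suc n)) = \<phi> ((u + real n) + 1)" by (simp add: algebra_simps)
  also have "\<dots> = \<phi> (u + real n)" using per by blast
  finally show ?case using Suc by simp
qed simp

lemma phi_frac: "\<phi> u = \<phi> (frac u)"
proof (cases "floor u \<ge> 0")
  case True
  then have "u = frac u + real (nat (floor u))" by (simp add: frac_def)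
  then show ?thesis using per_nat[of "frac u" "nat (floor u)"] by simp
next
  case False
  then have "frac u = u + real (nat (- floor u))" by (simp add: frac_def)
  then show ?thesis using per_nat[of u "nat (- floor u)"] by simp
qed

lemma phi_bound: "\<bar>\<phi> u\<bar> \<le> B"
proof -
  have "dist (\<phi> (frac u)) (\<phi> 0) \<le> L * dist (frac u) 0"
    using lip by (intro lipschitz_onD) auto
  also have "\<dots> \<le> L * 1"
    using L0 frac_lt_1[of u] frac_ge_0[of u] by (intro mult_left_mono) (auto simp: dist_real_def)
  finally show ?thesis unfolding B_def using phi_frac[of u] by (auto simp: dist_real_def)
qed

lemma B0: "0 \<le> B" using phi_bound[of 0] by linarith
lemma C0: "0 \<le> C" unfolding C_def using B0 g1 by simp

lemma trm_bound: "\<bar>trm x j n\<bar> \<le> B * \<gamma> ^ n"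
  unfolding trm_def using phi_bound g0
  by (simp add: abs_mult mult.commute mult_left_mono)

lemma geo: "summable (\<lambda>n. B * \<gamma> ^ n)" "(\<Sum>n. B * \<gamma> ^ n) = C"
  using g0 g1 by (auto simp: C_def suminf_mult summable_geometric suminf_geometric intro!: summable_mult)

lemma trm_summable: "summable (trm x j)"
  by (rule summable_comparison_test'[OF geo(1), of 0]) (use trm_bound in auto)

lemma S_eq: "S x j = suminf (trm x j)"
  unfolding Sfun_def trm_def ..

lemma S_bound: "\<bar>S x j\<bar> \<le> C"
proof -
  have "S x j \<le> C" unfolding S_eq geo(2)[symmetric]
    by (rule suminf_le) (use trm_bound trm_summable geo in \<open>auto simp: abs_le_iff\<close>)
  moreover have "- C \<le> S x j" unfolding S_eq geo(2)[symmetric] suminf_minus[OF geo(1), symmetric]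
  proof (rule suminf_le)
    show "\<And>n. - (B * \<gamma> ^ n) \<le> trm x j n" using trm_bound[of x j] by (simp add: abs_le_iff) (metis minus_le_iff)
    show "summable (\<lambda>n. - (B * \<gamma> ^ n))" using geo(1) summable_minus by blast
  qed (rule trm_summable)
  ultimately show ?thesis by auto
qed

lemma S_rec: "S x (case_nat i j) = \<phi> (xi x i) + \<gamma> * S (xi x i) j"
proof -
  have sm: "summable (trm x (case_nat i j))" by (rule trm_summable)
  have "suminf (trm x (case_nat i j)) = trm x (case_nat i j) 0 + (\<Sum>n. trm x (case_nat i j) (Suc n))"
    using suminf_split_head[OF sm] by simp
  moreover have "trm x (case_nat i j) 0 = \<phi> (xi x i)"
    unfolding trm_def xi_def by simp
  moreover have "trm x (case_nat i j) (Suc n) = \<gamma> * trm (xi x i) j n" for n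
  proof -
    have "(\<Sum>k<Suc (Suc n). real (case_nat i j k) * real b ^ k)
        = real i + real b * (\<Sum>k<Suc n. real (j k) * real b ^ k)"
      by (subst sum.lessThan_Suc_shift) (simp add: sum_distrib_left algebra_simps)
    then show ?thesis unfolding trm_def xi_def using bpos
      by (simp add: field_simps)
  qed
  ultimately show ?thesis
    unfolding S_eq using trm_summable by (simp add: suminf_mult)
qed


lemma S_lip: "\<bar>S x j - S x' j\<bar> \<le> L / (1 - \<gamma>) * \<bar>x - x'\<bar>"
proof -
  define D where "D = L * \<bar>x - x'\<bar>"
  have D0: "0 \<le> D" unfolding D_def using L0 by simp
  have tb: "\<bar>trm x j n - trm x' j n\<bar> \<le> D * \<gamma> ^ n" for n
  proof -
    let ?T = "(\<Sum>k<Suc n. real (j k) * real b ^ k)"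
    have "dist (\<phi> ((x + ?T) / real b ^ Suc n)) (\<phi> ((x' + ?T) / real b ^ Suc n))
         \<le> L * dist ((x + ?T) / real b ^ Suc n) ((x' + ?T) / real b ^ Suc n)"
      using lip by (intro lipschitz_onD) auto
    also have "dist ((x + ?T) / real b ^ Suc n) ((x' + ?T) / real b ^ Suc n) = \<bar>x - x'\<bar> / real b ^ Suc n"
      using bpos by (simp add: dist_real_def diff_divide_distrib[symmetric] abs_divide)
    also have "\<dots> \<le> \<bar>x - x'\<bar>"
    proof -
      have "1 \<le> real b ^ Suc n" by (intro one_le_power) (use bpos in simp)
      then show ?thesis by (simp add: divide_le_eq mult_le_cancel_left1)
    qed
    finally have "\<bar>\<phi> ((x + ?T) / real b ^ Suc n) - \<phi> ((x' + ?T) / real b ^ Suc n)\<bar> \<le> D"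
      unfolding D_def using L0 by (simp add: dist_real_def) (meson mult_left_mono order_trans)
    then show ?thesis unfolding trm_def using g0
      by (simp add: right_diff_distrib[symmetric] abs_mult mult.commute mult_left_mono)
  qed
  have gs: "summable (\<lambda>n. D * \<gamma> ^ n)" "(\<Sum>n. D * \<gamma> ^ n) = L / (1 - \<gamma>) * \<bar>x - x'\<bar>"
    using g0 g1 by (auto simp: D_def suminf_mult summable_geometric suminf_geometric intro!: summable_mult)
  have eq: "S x j - S x' j = (\<Sum>n. trm x j n - trm x' j n)"
    unfolding S_eq using suminf_diff[OF trm_summable trm_summable] by simp
  have sd: "summable (\<lambda>n. trm x j n - trm x' j n)" by (intro summable_diff trm_summable)
  have "S x j - S x' j \<le> L / (1 - \<gamma>) * \<bar>x - x'\<bar>" unfolding eq gs(2)[symmetric]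
    by (rule suminf_le) (use tb sd gs in \<open>auto simp: abs_le_iff\<close>)
  moreover have "- (L / (1 - \<gamma>) * \<bar>x - x'\<bar>) \<le> S x j - S x' j" unfolding eq gs(2)[symmetric] suminf_minus[OF gs(1), symmetric]
  proof (rule suminf_le)
    fix n show "- (D * \<gamma> ^ n) \<le> trm x j n - trm x' j n" using tb[of n] by (simp add: abs_le_iff)
    show "summable (\<lambda>n. - (D * \<gamma> ^ n))" using gs(1) summable_minus by blast
  qed (rule sd)
  ultimately show ?thesis by auto
qed

lemma phi_cont: "continuous_on UNIV \<phi>"
  using lip lipschitz_on_continuous_on by blast

lemma phi_meas[measurable]: "\<phi> \<in> borel_measurable borel"
  using phi_cont by (rule borel_measurable_continuous_onI)

lemma S_meas[measurable]: "S x \<in> borel_measurable P"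
  unfolding Sfun_def digit_measure_def by measurable

lemma G_sets[measurable]: "{j. \<bar>S x j - y\<bar> < r} \<in> sets P"
proof -
  have "{j. \<bar>S x j - y\<bar> < r} = {j \<in> space P. \<bar>S x j - y\<bar> < r}" by (simp add: space_digit)
  also have "\<dots> \<in> sets P" by measurable
  finally show ?thesis .
qed

lemma G_nonneg: "0 \<le> G x y r" unfolding G_def by simp
lemma G_le1: "G x y r \<le> 1" unfolding G_def by (rule Pp.prob_le_1)
lemma G_mono: "r \<le> r' \<Longrightarrow> G x y r \<le> G x y r'"
  unfolding G_def by (rule Pp.finite_measure_mono) auto
lemma G_pos: "G x y r > 0 \<Longrightarrow> \<exists>j. \<bar>S x j - y\<bar> < r"
  unfolding G_def by (cases "{j. \<bar>S x j - y\<bar> < r} = {}") auto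
lemma G_one: "(\<And>j. \<bar>S x j - y\<bar> < r) \<Longrightarrow> G x y r = 1"
  unfolding G_def using Pp.prob_space by (simp add: space_digit)

lemma G_decomp: "G x y r = (\<Sum>i<b. G (xi x i) ((y - \<phi> (xi x i)) / \<gamma>) (r / \<gamma>)) / real b"
proof -
  have set_eq: "{j. case_nat i j \<in> {j. \<bar>S x j - y\<bar> < r}} = {j. \<bar>S (xi x i) j - (y - \<phi> (xi x i)) / \<gamma>\<bar> < r / \<gamma>}" for i
  proof -
    have "\<bar>\<phi> (xi x i) + \<gamma> * S (xi x i) j - y\<bar> = \<gamma> * \<bar>S (xi x i) j - (y - \<phi> (xi x i)) / \<gamma>\<bar>" for j
    proof -
      have "\<phi> (xi x i) + \<gamma> * S (xi x i) j - y = \<gamma> * (S (xi x i) j - (y - \<phi> (xi x i)) / \<gamma>)"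
        using g0 by (simp add: field_simps)
      then show ?thesis using g0 by (simp add: abs_mult)
    qed
    then show ?thesis using g0 by (auto simp: S_rec pos_less_divide_eq mult.commute)
  qed
  have "emeasure P {j. \<bar>S x j - y\<bar> < r} = (\<Sum>i<b. emeasure P {j. case_nat i j \<in> {j. \<bar>S x j - y\<bar> < r}}) / b"
    by (rule decomp_emeasure[OF bpos G_sets])
  then have "ennreal (G x y r) = (\<Sum>i<b. ennreal (G (xi x i) ((y - \<phi> (xi x i)) / \<gamma>) (r / \<gamma>))) / ennreal (real b)"
    unfolding set_eq G_def Pp.emeasure_eq_measure by (simp add: ennreal_of_nat_eq_real_of_nat)
  also have "\<dots> = ennreal ((\<Sum>i<b. G (xi x i) ((y - \<phi> (xi x i)) / \<gamma>) (r / \<gamma>)) / real b)"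
    using bpos by (subst sum_ennreal) (auto simp: G_nonneg divide_ennreal sum_nonneg)
  finally show ?thesis using G_nonneg
    by (subst (asm) ennreal_inj) (auto intro!: divide_nonneg_nonneg sum_nonneg)
qed


lemma xi_in: "x \<in> {0..1} \<Longrightarrow> i < b \<Longrightarrow> xi x i \<in> {0..1}"
  unfolding xi_def using bpos by (auto simp: divide_le_eq)

lemma avg_child:
  fixes g :: "nat \<Rightarrow> real"
  assumes le: "\<And>i. i < b \<Longrightarrow> g i \<le> U" and gt: "(\<Sum>i<b. g i) / real b > U - t" and i: "i < b"
  shows "g i > U - real b * t"
proof -
  have "(\<Sum>i<b. g i) > real b * (U - t)" using gt bpos by (simp add: pos_less_divide_eq mult.commute)
  moreover have "(\<Sum>i<b. g i) = g i + (\<Sum>i'\<in>{..<b} - {i}. g i')"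
    using i by (subst sum.remove[of _ i]) auto
  moreover have "(\<Sum>i'\<in>{..<b} - {i}. g i') \<le> of_nat (card ({..<b} - {i})) * U"
    by (rule sum_bounded_above) (use le in auto)
  moreover have "card ({..<b} - {i}) = b - 1" using i by simp
  moreover have "real (b - 1) = real b - 1" using bpos by simp
  ultimately show ?thesis by (simp add: algebra_simps)
qed

lemma K: "G x y \<rho> > 0 \<Longrightarrow> G x y (\<rho> + 2 * C * \<gamma> ^ N) \<ge> 1 / real b ^ N"
proof (induction N arbitrary: x y \<rho>)
  case 0
  then obtain j where j: "\<bar>S x j - y\<bar> < \<rho>" using G_pos by blast
  have "\<bar>S x j' - y\<bar> < \<rho> + 2 * C * \<gamma> ^ 0" for j'
    using j S_bound[of x j] S_bound[of x j'] by (simp add: abs_le_iff abs_less_iff)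
  then show ?case using G_one by simp
next
  case (Suc N)
  let ?y = "\<lambda>i. (y - \<phi> (xi x i)) / \<gamma>"
  obtain i where i: "i < b" "G (xi x i) (?y i) (\<rho> / \<gamma>) > 0"
  proof (rule ccontr)
    assume "\<not> thesis"
    then have "\<And>i. i < b \<Longrightarrow> G (xi x i) (?y i) (\<rho> / \<gamma>) \<le> 0" using that by force
    then have "(\<Sum>i<b. G (xi x i) (?y i) (\<rho> / \<gamma>)) \<le> 0" by (intro sum_nonpos) auto
    then have "G x y \<rho> \<le> 0" using G_decomp[of x y \<rho>] bpos by (simp add: divide_nonpos_pos)
    then show False using Suc.prems by simp
  qed
  have ih: "G (xi x i) (?y i) (\<rho> / \<gamma> + 2 * C * \<gamma> ^ N) \<ge> 1 / real b ^ N" using Suc.IH[OF i(2)] .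
  have eq: "(\<rho> + 2 * C * \<gamma> ^ Suc N) / \<gamma> = \<rho> / \<gamma> + 2 * C * \<gamma> ^ N" using g0 by (simp add: field_simps)
  have "G (xi x i) (?y i) (\<rho> / \<gamma> + 2 * C * \<gamma> ^ N) \<le> (\<Sum>i<b. G (xi x i) (?y i) ((\<rho> + 2 * C * \<gamma> ^ Suc N) / \<gamma>))"
    unfolding eq by (rule member_le_sum) (use i G_nonneg in auto)
  then have "1 / real b ^ N \<le> (\<Sum>i<b. G (xi x i) (?y i) ((\<rho> + 2 * C * \<gamma> ^ Suc N) / \<gamma>))"
    using ih by linarith
  then have "1 / real b ^ N / real b \<le> (\<Sum>i<b. G (xi x i) (?y i) ((\<rho> + 2 * C * \<gamma> ^ Suc N) / \<gamma>)) / real b"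
    by (rule divide_right_mono) (use bpos in simp)
  then have "1 / real b ^ N / real b \<le> G x y (\<rho> + 2 * C * \<gamma> ^ Suc N)"
    using G_decomp[of x y "\<rho> + 2 * C * \<gamma> ^ Suc N"] by simp
  then show ?case by (simp add: field_simps)
qed

lemma child:
  assumes Ub: "\<And>x' y' \<rho>'. x' \<in> {0..1} \<Longrightarrow> 0 < \<rho>' \<Longrightarrow> \<rho>' \<le> R \<Longrightarrow> G x' y' \<rho>' \<le> U"
    and x: "x \<in> {0..1}" and r: "0 < \<rho>" "\<rho> / \<gamma> \<le> R" and gt: "G x y \<rho> > U - t" and i: "i < b"
  shows "G (xi x i) ((y - \<phi> (xi x i)) / \<gamma>) (\<rho> / \<gamma>) > U - real b * t"
proof (rule avg_child[OF _ _ i])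
  show "\<And>i. i < b \<Longrightarrow> G (xi x i) ((y - \<phi> (xi x i)) / \<gamma>) (\<rho> / \<gamma>) \<le> U"
  proof -
    fix i' assume "i' < b"
    moreover have "0 < \<rho> / \<gamma>" using r g0 by simp
    ultimately show "G (xi x i') ((y - \<phi> (xi x i')) / \<gamma>) (\<rho> / \<gamma>) \<le> U"
      using Ub[OF xi_in[OF x] _ r(2)] by blast
  qed
  show "U - t < (\<Sum>i<b. G (xi x i) ((y - \<phi> (xi x i)) / \<gamma>) (\<rho> / \<gamma>)) / real b"
    using gt G_decomp[of x y \<rho>] by simp
qed

lemma pow_div_le: "0 < \<rho> \<Longrightarrow> \<rho> / \<gamma> \<le> \<rho> / \<gamma> ^ Suc n"
proof -
  assume "0 < \<rho>"
  moreover have "\<gamma> ^ Suc n \<le> \<gamma>" using g0 g1 power_decreasing[of 1 "Suc n" \<gamma>] by simp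
  ultimately show ?thesis using g0 by (intro divide_left_mono) auto
qed

lemma close:
  assumes Ub: "\<And>x' y' \<rho>'. x' \<in> {0..1} \<Longrightarrow> 0 < \<rho>' \<Longrightarrow> \<rho>' \<le> R \<Longrightarrow> G x' y' \<rho>' \<le> U"
  shows "x \<in> {0..1} \<Longrightarrow> 0 < \<rho> \<Longrightarrow> \<rho> / \<gamma> ^ k \<le> R \<Longrightarrow> G x y \<rho> > U - t \<Longrightarrow> real b ^ k * t \<le> U
     \<Longrightarrow> j0 \<in> digit_space b \<Longrightarrow> \<bar>S x j0 - y\<bar> \<le> \<rho> + 2 * C * \<gamma> ^ k"
proof (induction k arbitrary: x y \<rho> t j0)
  case 0
  then have "G x y \<rho> > 0" by simp
  then obtain j where j: "\<bar>S x j - y\<bar> < \<rho>" using G_pos by blast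
  then show ?case using S_bound[of x j] S_bound[of x j0] by (simp add: abs_le_iff abs_less_iff)
next
  case (Suc k)
  define i where "i = j0 0"
  define j' where "j' = (\<lambda>n. j0 (Suc n))"
  have j0: "j0 = case_nat i j'" unfolding i_def j'_def by (auto split: nat.split)
  have i: "i < b" using Suc.prems(6) unfolding i_def digit_space_def by auto
  have j': "j' \<in> digit_space b" using Suc.prems(6) unfolding j'_def digit_space_def by auto
  have r: "\<rho> / \<gamma> \<le> R" using pow_div_le[OF Suc.prems(2), of k] Suc.prems(3) by simp
  have c: "G (xi x i) ((y - \<phi> (xi x i)) / \<gamma>) (\<rho> / \<gamma>) > U - real b * t"
    by (rule child[OF Ub Suc.prems(1) Suc.prems(2) r Suc.prems(4) i])
  have "\<bar>S (xi x i) j' - (y - \<phi> (xi x i)) / \<gamma>\<bar> \<le> \<rho> / \<gamma> + 2 * C * \<gamma> ^ k"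
  proof (rule Suc.IH[OF xi_in[OF Suc.prems(1) i] _ _ c _ j'])
    show "0 < \<rho> / \<gamma>" using Suc.prems(2) g0 by simp
    show "\<rho> / \<gamma> / \<gamma> ^ k \<le> R" using Suc.prems(3) by (simp add: field_simps)
    show "real b ^ k * (real b * t) \<le> U" using Suc.prems(5) by (simp add: field_simps)
  qed
  moreover have "S x j0 - y = \<gamma> * (S (xi x i) j' - (y - \<phi> (xi x i)) / \<gamma>)"
    unfolding j0 S_rec using g0 by (simp add: field_simps)
  ultimately have "\<bar>S x j0 - y\<bar> \<le> \<gamma> * (\<rho> / \<gamma> + 2 * C * \<gamma> ^ k)"
    using g0 by (simp add: abs_mult mult_left_mono)
  moreover have "\<gamma> * (\<rho> / \<gamma> + 2 * C * \<gamma> ^ k) = \<rho> + 2 * C * \<gamma> ^ Suc k" using g0 by (simp add: field_simps)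
  ultimately show ?case by linarith
qed

definition "one = (\<lambda>_::nat. 1::nat)"
definition "zero = (\<lambda>_::nat. 0::nat)"
definition "D z = S z one - S z zero"

lemma one_ds: "one \<in> digit_space b" and zero_ds: "zero \<in> digit_space b"
  using b2 by (auto simp: one_def zero_def digit_space_def)

lemma desc:
  assumes Ub: "\<And>x' y' \<rho>'. x' \<in> {0..1} \<Longrightarrow> 0 < \<rho>' \<Longrightarrow> \<rho>' \<le> R \<Longrightarrow> G x' y' \<rho>' \<le> U"
  shows "x \<in> {0..1} \<Longrightarrow> 0 < \<rho> \<Longrightarrow> \<rho> / \<gamma> ^ (m + k) \<le> R \<Longrightarrow> G x y \<rho> > U - t \<Longrightarrow> real b ^ (m + k) * t \<le> U
     \<Longrightarrow> q < b ^ m \<Longrightarrow> \<bar>D ((x + real q) / real b ^ m)\<bar> \<le> 2 * (\<rho> / \<gamma> ^ m + 2 * C * \<gamma> ^ k)"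
proof (induction m arbitrary: x y \<rho> t q)
  case 0
  have "\<bar>S x one - y\<bar> \<le> \<rho> + 2 * C * \<gamma> ^ k" "\<bar>S x zero - y\<bar> \<le> \<rho> + 2 * C * \<gamma> ^ k"
  proof -
    have h3: "\<rho> / \<gamma> ^ k \<le> R" using 0(3) by simp
    have h5: "real b ^ k * t \<le> U" using 0(5) by simp
    show "\<bar>S x one - y\<bar> \<le> \<rho> + 2 * C * \<gamma> ^ k" by (rule close[OF Ub 0(1) 0(2) h3 0(4) h5 one_ds])
    show "\<bar>S x zero - y\<bar> \<le> \<rho> + 2 * C * \<gamma> ^ k" by (rule close[OF Ub 0(1) 0(2) h3 0(4) h5 zero_ds])
  qed
  then show ?case using 0 unfolding D_def by (simp add: abs_le_iff)
next
  case (Suc m)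
  define i where "i = q mod b"
  define q' where "q' = q div b"
  have i: "i < b" unfolding i_def using bpos by simp
  have q': "q' < b ^ m" unfolding q'_def using Suc.prems(6) bpos
    by (simp add: less_mult_imp_div_less mult.commute)
  have qeq: "real q = real i + real b * real q'"
    unfolding i_def q'_def by (metis mod_div_mult_eq mult.commute of_nat_add of_nat_mult)
  have r: "\<rho> / \<gamma> \<le> R" using pow_div_le[OF Suc.prems(2), of "m + k"] Suc.prems(3) by simp
  have c: "G (xi x i) ((y - \<phi> (xi x i)) / \<gamma>) (\<rho> / \<gamma>) > U - real b * t"
    by (rule child[OF Ub Suc.prems(1) Suc.prems(2) r Suc.prems(4) i])
  have "\<bar>D ((xi x i + real q') / real b ^ m)\<bar> \<le> 2 * (\<rho> / \<gamma> / \<gamma> ^ m + 2 * C * \<gamma> ^ k)"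
  proof (rule Suc.IH[OF xi_in[OF Suc.prems(1) i] _ _ c _ q'])
    show "0 < \<rho> / \<gamma>" using Suc.prems(2) g0 by simp
    show "\<rho> / \<gamma> / \<gamma> ^ (m + k) \<le> R" using Suc.prems(3) by (simp add: field_simps)
    show "real b ^ (m + k) * (real b * t) \<le> U" using Suc.prems(5) by (simp add: field_simps)
  qed
  moreover have "(xi x i + real q') / real b ^ m = (x + real q) / real b ^ Suc m"
    unfolding xi_def qeq using bpos by (simp add: field_simps)
  moreover have "\<rho> / \<gamma> / \<gamma> ^ m = \<rho> / \<gamma> ^ Suc m" by (simp add: field_simps)
  ultimately show ?case by simp
qed

lemma D_lip: "\<bar>D z - D z'\<bar> \<le> 2 * (L / (1 - \<gamma>)) * \<bar>z - z'\<bar>"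
  using S_lip[of z one z'] S_lip[of z zero z'] unfolding D_def by (simp add: abs_le_iff)


lemma grid:
  fixes w :: real
  assumes "0 \<le> w" "w \<le> real n" "1 \<le> n"
  shows "\<exists>q<n. real q \<le> w \<and> w \<le> real q + 1"
proof (cases "w < real n")
  case True
  define q where "q = nat \<lfloor>w\<rfloor>"
  have rq: "real q = of_int \<lfloor>w\<rfloor>" using assms(1) by (simp add: q_def)
  have "of_int \<lfloor>w\<rfloor> < real n" using True of_int_floor_le[of w] by linarith
  then have "q < n" using rq by linarith
  moreover have "real q \<le> w" "w \<le> real q + 1" using rq of_int_floor_le[of w] real_of_int_floor_add_one_ge[of w] by linarith+
  ultimately show ?thesis by blast
next
  case False
  then have "w = real n" using assms by simp
  then show ?thesis using assms(3) by (intro exI[of _ "n - 1"]) auto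
qed

lemma nonatomic:
  assumes H: "cond_H b \<gamma> \<phi>"
  shows "\<forall>\<theta>>0. \<exists>\<rho>>0. \<forall>x\<in>{0..1}. \<forall>y. G x y \<rho> \<le> \<theta>"
proof (rule ccontr)
  assume "\<not> ?thesis"
  then obtain \<theta> where th: "\<theta> > 0" and neg: "\<And>\<rho>. \<rho> > 0 \<Longrightarrow> \<exists>x\<in>{0..1}. \<exists>y. G x y \<rho> > \<theta>"
    by (auto simp: not_le)
  define A where "A \<rho> = {G x y \<rho> | x y. x \<in> {0..1::real}}" for \<rho>
  define Mf where "Mf \<rho> = Sup (A \<rho>)" for \<rho>
  have Ane: "A \<rho> \<noteq> {}" for \<rho> unfolding A_def by force
  have Abdd: "bdd_above (A \<rho>)" for \<rho> unfolding A_def using G_le1 by (auto intro: bdd_aboveI[of _ 1])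
  have Mf_ge: "G x y \<rho> \<le> Mf \<rho>" if "x \<in> {0..1}" for x y \<rho>
    unfolding Mf_def by (rule cSup_upper[OF _ Abdd]) (use that in \<open>auto simp: A_def\<close>)
  have Mf_th: "\<theta> \<le> Mf \<rho>" if rp: "\<rho> > 0" for \<rho>
  proof -
    obtain x y where "x \<in> {0..1}" "G x y \<rho> > \<theta>" using neg[OF rp] by blast
    then show ?thesis using Mf_ge[of x y \<rho>] by linarith
  qed
  have Mf_gt: "\<exists>x\<in>{0..1}. \<exists>y. G x y \<rho> > s" if "s < Mf \<rho>" for s \<rho>
    using that unfolding Mf_def using less_cSup_iff[OF Ane Abdd] by (auto simp: A_def)
  define M0 where "M0 = Inf (Mf ` {0<..})"
  have Ine: "Mf ` {0<..} \<noteq> {}" by auto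
  have Ibdd: "bdd_below (Mf ` {0<..})" using Mf_th by (auto intro: bdd_belowI[of _ \<theta>])
  have M0_th: "\<theta> \<le> M0" unfolding M0_def by (rule cInf_greatest[OF Ine]) (use Mf_th in auto)
  have M0_le: "M0 \<le> Mf \<rho>" if "\<rho> > 0" for \<rho> unfolding M0_def by (rule cInf_lower[OF _ Ibdd]) (use that in auto)
  have M0_lt: "\<exists>R>0. Mf R < s" if "M0 < s" for s using that unfolding M0_def using cInf_less_iff[OF Ine Ibdd] by auto
  have M0pos: "M0 > 0" using th M0_th by linarith

  have bound: "\<bar>D z\<bar> \<le> 2 * (1 + 2 * C) * \<gamma> ^ k + 2 * (L / (1 - \<gamma>)) * (1 / real b ^ m)" if z: "z \<in> {0..1}" for z k m
  proof -
    define t where "t = M0 / real b ^ (m + k)"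
    define U where "U = M0 + t / 2"
    have t0: "t > 0" using M0pos bpos by (simp add: t_def)
    obtain R0 where R0: "R0 > 0" "Mf R0 < U" using M0_lt[of U] t0 U_def by auto
    define R where "R = min R0 1"
    have R: "R > 0" "R \<le> 1" "R \<le> R0" using R0 by (auto simp: R_def)
    have Ub: "G x' y' \<rho>' \<le> U" if "x' \<in> {0..1}" "0 < \<rho>'" "\<rho>' \<le> R" for x' y' \<rho>'
    proof -
      have "G x' y' \<rho>' \<le> G x' y' R0" using R that by (intro G_mono) auto
      also have "\<dots> \<le> Mf R0" using Mf_ge that by blast
      finally show "G x' y' \<rho>' \<le> U" using R0 by linarith
    qed
    define \<rho> where "\<rho> = R * \<gamma> ^ (m + k)"
    have \<rho>0: "\<rho> > 0" using R g0 by (simp add: \<rho>_def)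
    have \<rho>R: "\<rho> / \<gamma> ^ (m + k) \<le> R" using g0 by (simp add: \<rho>_def)
    have "U - t < Mf \<rho>" using M0_le[OF \<rho>0] t0 U_def by linarith
    then obtain x y where x: "x \<in> {0..1}" and gt: "G x y \<rho> > U - t" using Mf_gt by blast
    have bt: "real b ^ (m + k) * t \<le> U" using bpos t0 by (simp add: t_def U_def)
    have dq: "\<bar>D ((x + real q) / real b ^ m)\<bar> \<le> 2 * (\<rho> / \<gamma> ^ m + 2 * C * \<gamma> ^ k)" if "q < b ^ m" for q
      using desc[OF Ub x \<rho>0 \<rho>R gt bt that] by blast
    have \<rho>m: "\<rho> / \<gamma> ^ m = R * \<gamma> ^ k" using g0 by (simp add: \<rho>_def power_add)
    have bm: "1 \<le> b ^ m" using bpos by simp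
    have bmr: "real b ^ m > 0" using bpos by simp
    have "z * real b ^ m \<le> real (b ^ m)" using z bmr by (simp add: mult_le_cancel_right1)
    then obtain q where q: "q < b ^ m" "real q \<le> z * real b ^ m" "z * real b ^ m \<le> real q + 1"
      using grid[of "z * real b ^ m" "b ^ m"] z bm by auto
    define z' where "z' = (x + real q) / real b ^ m"
    have "z - z' = (z * real b ^ m - real q - x) / real b ^ m" unfolding z'_def using bmr by (simp add: field_simps)
    moreover have "\<bar>z * real b ^ m - real q - x\<bar> \<le> 1" using q x by auto
    ultimately have zz: "\<bar>z - z'\<bar> \<le> 1 / real b ^ m" using bmr by (simp add: abs_divide divide_right_mono)
    have "\<bar>D z\<bar> \<le> \<bar>D z'\<bar> + \<bar>D z - D z'\<bar>" by linarith
    also have "\<bar>D z'\<bar> \<le> 2 * (R * \<gamma> ^ k + 2 * C * \<gamma> ^ k)" using dq[OF q(1)] \<rho>m unfolding z'_def by simp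
    also have "\<dots> \<le> 2 * (1 + 2 * C) * \<gamma> ^ k" using R g0 by (simp add: algebra_simps mult_right_le_one_le)
    also have "\<bar>D z - D z'\<bar> \<le> 2 * (L / (1 - \<gamma>)) * (1 / real b ^ m)"
      using D_lip[of z z'] zz L0 g1 by (smt (verit) divide_nonneg_nonneg mult_left_mono)
    finally show ?thesis by simp
  qed
  have Dz: "D z = 0" if z: "z \<in> {0..1}" for z
  proof (rule ccontr)
    assume "D z \<noteq> 0"
    then have e: "\<bar>D z\<bar> > 0" by simp
    define c where "c = 2 * (L / (1 - \<gamma>))"
    have c0: "c \<ge> 0" unfolding c_def using L0 g1 by simp
    obtain k where k: "\<gamma> ^ k < \<bar>D z\<bar> / (4 * (1 + 2 * C))" using real_arch_pow_inv[of "\<bar>D z\<bar> / (4 * (1 + 2 * C))" \<gamma>] e C0 g1 by auto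
    have bi: "inverse (real b) < 1" using b2 by (auto simp: inverse_eq_divide)
    obtain m where m: "inverse (real b) ^ m < \<bar>D z\<bar> / (2 * c + 2)" using real_arch_pow_inv[OF _ bi, of "\<bar>D z\<bar> / (2 * c + 2)"] e c0 by auto
    have p: "0 < 4 * (1 + 2 * C)" using C0 by simp
    have k4: "4 * (1 + 2 * C) * \<gamma> ^ k < \<bar>D z\<bar>" using k p by (simp add: pos_less_divide_eq mult.commute)
    have 1: "2 * (1 + 2 * C) * \<gamma> ^ k < \<bar>D z\<bar> / 2"
      using k4 by (simp only: mult.assoc)
    have inv: "inverse (real b) ^ m = 1 / real b ^ m" by (simp add: inverse_eq_divide power_one_over)
    have "c * inverse (real b) ^ m \<le> c * (\<bar>D z\<bar> / (2 * c + 2))" using m c0 by (intro mult_left_mono) auto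
    also have "\<dots> < \<bar>D z\<bar> / 2"
    proof -
      have "c / (2 * c + 2) < 1 / 2" using c0 by (simp add: divide_less_eq)
      then have "\<bar>D z\<bar> * (c / (2 * c + 2)) < \<bar>D z\<bar> * (1 / 2)" using e by (intro mult_strict_left_mono)
      then show ?thesis by (simp add: mult.commute)
    qed
    finally have 2: "c * (1 / real b ^ m) < \<bar>D z\<bar> / 2" unfolding inv .
    show False using bound[OF z, of k m] 1 2 unfolding c_def by linarith
  qed
  have "zero \<noteq> one" unfolding zero_def one_def by (metis zero_neq_one)
  then have "\<not> (\<forall>x\<in>{0..1}. S x one - S x zero = 0)"
    using H one_ds zero_ds unfolding cond_H_def by blast
  then show False using Dz unfolding D_def by auto
qed


lemma main:
  assumes H: "cond_H b \<gamma> \<phi>" and \<epsilon>: "\<epsilon> > 0"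
  shows "\<exists>\<delta>>0. \<forall>x\<in>{0..1}. \<forall>y. \<forall>r\<in>{0<..<1}. G x y (\<delta> * r) \<le> \<epsilon> * G x y r"
proof -
  obtain N where N: "\<gamma> ^ N < \<gamma> / (4 * C + 2)"
    using real_arch_pow_inv[of "\<gamma> / (4 * C + 2)" \<gamma>] g0 g1 C0 by auto
  have "(4 * C + 2) * \<gamma> ^ N < \<gamma>" using N C0 by (simp add: less_divide_eq mult.commute)
  moreover have "0 \<le> \<gamma> ^ N" using g0 by simp
  ultimately have N2: "2 * C * \<gamma> ^ N \<le> \<gamma> / 2" by (simp add: algebra_simps)
  have bN: "real b ^ N > 0" using bpos by simp
  obtain \<rho>0 where \<rho>0: "\<rho>0 > 0" "\<And>x y. x \<in> {0..1} \<Longrightarrow> G x y \<rho>0 \<le> \<epsilon> / real b ^ N"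
    using nonatomic[OF H] \<epsilon> bN by (meson divide_pos_pos)
  define \<delta> where "\<delta> = min \<rho>0 (1/2)"
  have \<delta>: "\<delta> > 0" "\<delta> \<le> \<rho>0" "\<delta> \<le> 1/2" using \<rho>0 by (auto simp: \<delta>_def)
  have base: "G x y (\<delta> * r) \<le> \<epsilon> * G x y r" if x: "x \<in> {0..1}" and r: "\<gamma> \<le> r" "r < 1" for x y r
  proof (cases "G x y (\<delta> * r) = 0")
    case True
    then show ?thesis using G_nonneg[of x y r] \<epsilon> by simp
  next
    case False
    then have pos: "G x y (\<delta> * r) > 0" using G_nonneg[of x y "\<delta> * r"] by linarith
    have r0: "r > 0" using r g0 by linarith
    have "1 / real b ^ N \<le> G x y (\<delta> * r + 2 * C * \<gamma> ^ N)" by (rule K[OF pos])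
    also have "\<dots> \<le> G x y r"
    proof (rule G_mono)
      have "\<delta> * r \<le> r / 2" using \<delta>(3) r0 by (simp add: mult_right_mono)
      then show "\<delta> * r + 2 * C * \<gamma> ^ N \<le> r" using N2 r by linarith
    qed
    finally have lo: "1 / real b ^ N \<le> G x y r" .
    have "\<delta> * r \<le> \<rho>0" using \<delta> r r0 by (smt (verit) mult_left_le)
    then have "G x y (\<delta> * r) \<le> G x y \<rho>0" by (rule G_mono)
    also have "\<dots> \<le> \<epsilon> / real b ^ N" using \<rho>0(2)[OF x] .
    also have "\<dots> = \<epsilon> * (1 / real b ^ N)" by simp
    also have "\<dots> \<le> \<epsilon> * G x y r" using lo \<epsilon> by (intro mult_left_mono) auto
    finally show ?thesis .
  qed
  have ind: "\<forall>x\<in>{0..1}. \<forall>y r. \<gamma> ^ Suc n \<le> r \<longrightarrow> r < 1 \<longrightarrow> G x y (\<delta> * r) \<le> \<epsilon> * G x y r" for n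
  proof (induction n)
    case 0
    then show ?case using base by simp
  next
    case (Suc n)
    show ?case
    proof (intro ballI allI impI)
      fix x y r :: real assume x: "x \<in> {0..1}" and r: "\<gamma> ^ Suc (Suc n) \<le> r" "r < 1"
      show "G x y (\<delta> * r) \<le> \<epsilon> * G x y r"
      proof (cases "\<gamma> \<le> r")
        case True
        then show ?thesis using base x r by blast
      next
        case False
        have r1: "\<gamma> ^ Suc n \<le> r / \<gamma>" using r(1) g0 by (simp add: le_divide_eq mult.commute)
        have r2: "r / \<gamma> < 1" using False g0 by (simp add: divide_less_eq)
        let ?y = "\<lambda>i. (y - \<phi> (xi x i)) / \<gamma>"
        have each: "G (xi x i) (?y i) (\<delta> * (r / \<gamma>)) \<le> \<epsilon> * G (xi x i) (?y i) (r / \<gamma>)" if "i < b" for i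
          using Suc.IH xi_in[OF x that] r1 r2 by blast
        have "G x y (\<delta> * r) = (\<Sum>i<b. G (xi x i) (?y i) (\<delta> * (r / \<gamma>))) / real b"
          using G_decomp[of x y "\<delta> * r"] by simp
        also have "\<dots> \<le> (\<Sum>i<b. \<epsilon> * G (xi x i) (?y i) (r / \<gamma>)) / real b"
          by (intro divide_right_mono sum_mono each) auto
        also have "\<dots> = \<epsilon> * ((\<Sum>i<b. G (xi x i) (?y i) (r / \<gamma>)) / real b)"
          by (simp add: sum_distrib_left)
        also have "\<dots> = \<epsilon> * G x y r" using G_decomp[of x y r] by simp
        finally show ?thesis .
      qed
    qed
  qed
  show ?thesis
  proof (intro exI[of _ \<delta>] conjI ballI allI)
    show "\<delta> > 0" by (rule \<delta>(1))
    fix x y r assume x: "x \<in> {0..1::real}" and r: "r \<in> {0<..<1::real}"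
    obtain n where n: "\<gamma> ^ n < r" using real_arch_pow_inv[of r \<gamma>] r g1 by auto
    have "\<gamma> ^ Suc n \<le> \<gamma> ^ n" using g0 g1 by (simp add: power_decreasing)
    then show "G x y (\<delta> * r) \<le> \<epsilon> * G x y r" using ind[of n] x r n by auto
  qed
qed

lemma meas_ball: "measure (m_meas b \<gamma> \<phi> x) (ball y s) = G x y s"
proof -
  have "measure (m_meas b \<gamma> \<phi> x) (ball y s) = measure P (S x -` ball y s \<inter> space P)"
    unfolding m_meas_def by (rule measure_distr) auto
  also have "S x -` ball y s \<inter> space P = {j. \<bar>S x j - y\<bar> < s}"
    by (auto simp: space_digit dist_real_def abs_minus_commute)
  finally show ?thesis unfolding G_def .
qed

end

theorem proposition5p4:
  fixes b :: nat and \<gamma> :: real and \<phi> :: "real \<Rightarrow> real"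
  assumes "b \<ge> 2"
    and "0 < \<gamma>" and "\<gamma> < 1"
    and "\<forall>u. \<phi> (u + 1) = \<phi> u"
    and "\<exists>L. L-lipschitz_on UNIV \<phi>"
    and "cond_H b \<gamma> \<phi>"
  shows "\<forall>\<epsilon>>0. \<exists>\<delta>>0. \<forall>x\<in>{0..1}. \<forall>y::real. \<forall>r\<in>{0<..<1}.
           measure (m_meas b \<gamma> \<phi> x) (ball y (\<delta> * r))
             \<le> \<epsilon> * measure (m_meas b \<gamma> \<phi> x) (ball y r)"
proof -
  obtain L where L: "L-lipschitz_on UNIV \<phi>" using assms(5) by blast
  interpret WF b \<gamma> \<phi> L using assms(1-4) L by unfold_locales
  show ?thesis unfolding meas_ball using main[OF assms(6)] by blast
qed

end
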